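(* Let $X,Y$ be metrizable spaces with $X$ nonempty. Suppose $X=S\cup D$ where $S,D$ are disjoint dense subsets of $X$, and $Y=P\cup Q$ where $P,Q$ are disjoint dense subsets of $Y$. Let $Z=(S\times P)\cup(D\times Q)\subseteq X\times Y$ with the subspace topology of the product. Then $f\colon Z\to Y$, $f(x,y)=y$, is a continuous open surjection (and hence a quotient map).
   Context: A surjection $f\colon Z\to Y$ is a quotient map if for every $G\subseteq Y$, $G$ is open in $Y$ iff $f^{-1}(G)$ is open in $Z$. *)

theory Defs
  imports "HOL-Analysis.Analysis"
begin

end

theory Submission
  imports Defs
begin

theorem mainTheorem9:
  fixes X :: "'a topology" and Y :: "'b topology"
    and S D :: "'a set" and P Q :: "'b set"
  assumes "metrizable_space X" and "metrizable_space Y"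
    and "topspace X \<noteq> {}"
    and "S \<union> D = topspace X" and "S \<inter> D = {}"
    and "X closure_of S = topspace X" and "X closure_of D = topspace X"
    and "P \<union> Q = topspace Y" and "P \<inter> Q = {}"
    and "Y closure_of P = topspace Y" and "Y closure_of Q = topspace Y"
  shows "continuous_map (subtopology (prod_topology X Y) ((S \<times> P) \<union> (D \<times> Q))) Y snd
       \<and> open_map (subtopology (prod_topology X Y) ((S \<times> P) \<union> (D \<times> Q))) Y snd
       \<and> snd ` ((S \<times> P) \<union> (D \<times> Q)) = topspace Y
       \<and> quotient_map (subtopology (prod_topology X Y) ((S \<times> P) \<union> (D \<times> Q))) Y snd"
proof -
  define Z where "Z = (S \<times> P) \<union> (D \<times> Q)"
  have dS: "\<And>T. openin X T \<Longrightarrow> T \<noteq> {} \<Longrightarrow> S \<inter> T \<noteq> {}"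
    using assms(6) dense_intersects_open by blast
  have dD: "\<And>T. openin X T \<Longrightarrow> T \<noteq> {} \<Longrightarrow> D \<inter> T \<noteq> {}"
    using assms(7) dense_intersects_open by blast
  have Zsub: "Z \<subseteq> topspace X \<times> topspace Y" unfolding Z_def using assms(4,8) by auto
  have top: "topspace (subtopology (prod_topology X Y) Z) = Z"
    using Zsub by auto
  have cont: "continuous_map (subtopology (prod_topology X Y) Z) Y snd"
    by (simp add: continuous_map_from_subtopology continuous_map_snd)
  have surj: "snd ` Z = topspace Y"
  proof
    show "snd ` Z \<subseteq> topspace Y" using Zsub by auto
    show "topspace Y \<subseteq> snd ` Z"
    proof
      fix y assume y: "y \<in> topspace Y"
      obtain s where s: "s \<in> S" using dS[of "topspace X"] assms(3) by auto
      obtain d where d: "d \<in> D" using dD[of "topspace X"] assms(3) by auto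
      show "y \<in> snd ` Z"
      proof (cases "y \<in> P")
        case True then show ?thesis unfolding Z_def using s by (auto intro: image_eqI[of _ _ "(s,y)"])
      next
        case False then have "y \<in> Q" using y assms(8) by auto
        then show ?thesis unfolding Z_def using d by (auto intro: image_eqI[of _ _ "(d,y)"])
      qed
    qed
  qed
  have opn: "open_map (subtopology (prod_topology X Y) Z) Y snd"
    unfolding open_map_def
  proof (intro allI impI)
    fix U assume "openin (subtopology (prod_topology X Y) Z) U"
    then obtain W where W: "openin (prod_topology X Y) W" and U: "U = W \<inter> Z"
      by (auto simp: openin_subtopology)
    show "openin Y (snd ` U)"
    proof (subst openin_subopen, intro ballI)
      fix y assume "y \<in> snd ` U"
      then obtain x where xy: "(x,y) \<in> W" "(x,y) \<in> Z" using U by force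
      then obtain A B where AB: "openin X A" "openin Y B" "x \<in> A" "y \<in> B" "A \<times> B \<subseteq> W"
        using W unfolding openin_prod_topology_alt by blast
      have "B \<subseteq> snd ` U"
      proof
        fix v assume v: "v \<in> B"
        have vY: "v \<in> topspace Y" using AB(2) v openin_subset by blast
        have Ane: "A \<noteq> {}" using AB(3) by auto
        show "v \<in> snd ` U"
        proof (cases "v \<in> P")
          case True
          obtain s where "s \<in> S" "s \<in> A" using dS[OF AB(1) Ane] by auto
          then have "(s,v) \<in> U" using U AB(5) v True unfolding Z_def by auto
          then show ?thesis by (auto intro: image_eqI[of _ _ "(s,v)"])
        next
          case False then have vQ: "v \<in> Q" using vY assms(8) by auto
          obtain d where "d \<in> D" "d \<in> A" using dD[OF AB(1) Ane] by auto
          then have "(d,v) \<in> U" using U AB(5) v vQ unfolding Z_def by auto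
          then show ?thesis by (auto intro: image_eqI[of _ _ "(d,v)"])
        qed
      qed
      then show "\<exists>T. openin Y T \<and> y \<in> T \<and> T \<subseteq> snd ` U" using AB by blast
    qed
  qed
  have "quotient_map (subtopology (prod_topology X Y) Z) Y snd"
    using continuous_open_quotient_map[OF cont opn] surj top by simp
  then show ?thesis using cont opn surj unfolding Z_def by blast
qed

end
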